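(* For every extreme point $x$ of $\mathbf{S}$ there exists a non-uniformly stable matching $\mu$ in $G$ with $\chi_\mu=x$.
   Context: Setting: $G=(V,E)$ is a finite simple bipartite graph with $V=V_1\sqcup V_2$, every edge joining a vertex of $V_1$ to a vertex of $V_2$; an edge is identified with the set of its two endpoints. $E$ is partitioned into $E_1,E_2$. For $F\subseteq E$ and $v\in V$, $F(v)$ is the set of edges of $F$ incident to $v$. For every $v\in V$ there is a transitive and complete binary relation $\succsim_v$ on $E(v)\cup\{\emptyset\}$ with $e\succsim_v\emptyset$ and $\emptyset\not\succsim_v e$ for all $e\in E(v)$; $\succ_v$ and $\sim_v$ are its strict and indifference parts. A matching is $\mu\subseteq E$ with $|\mu(v)|\le1$ for all $v$; $\mu(v)$ denotes the edge of $\mu$ at $v$, or $\emptyset$. An edge $e\in E\setminus\mu$ weakly blocks $\mu$ if $e\succsim_v\mu(v)$ for every $v\in e$; it strongly blocks $\mu$ if additionally $e\succ_w\mu(w)$ for some $w\in e$. $\mu$ is non-uniformly stable if no edge of $E_1\setminus\mu$ weakly blocks $\mu$ and no edge of $E_2\setminus\mu$ strongly blocks $\mu$. For $x\in\mathbb{R}^E$, $x(F)=\sum_{e\in F}x(e)$; $\chi_F$ is the characteristic vector of $F$. $E[\succ_v e]=\{f\in E(v): f\succ_v e\}$, $E[\sim_v e]=\{f\in E(v): f\sim_v e\}$. $\mathbf{S}$ is the set of $x\in\mathbb{R}_+^E$ with (1) $x(E(v))\le1$ for all $v\in V$; (2) $x(e)+\sum_{v\in e}x(E[\succ_v e])\ge1$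 for all $e\in E_1$; (3) $x(E[\sim_v e])+\sum_{w\in e}x(E[\succ_w e])\ge1$ for all $e\in E_2$, $v\in e$. *)

theory Defs
  imports "HOL-Analysis.Analysis"
begin

text \<open>Vertices have type 'v; an edge is the set of its two endpoints (type 'v set).
  The empty set {} plays the role of the symbol for "unmatched".
  Preferences: R v a b means a is weakly preferred to b by v.\<close>

definition bip_graph :: "'v set \<Rightarrow> 'v set \<Rightarrow> 'v set set \<Rightarrow> bool" where
  "bip_graph V1 V2 E \<longleftrightarrow> finite V1 \<and> finite V2 \<and> V1 \<inter> V2 = {} \<and>
     E \<subseteq> {{a, b} | a b. a \<in> V1 \<and> b \<in> V2}"

definition inc :: "'v set set \<Rightarrow> 'v \<Rightarrow> 'v set set" where
  "inc F v = {e \<in> F. v \<in> e}"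

definition strict :: "('v \<Rightarrow> 'v set \<Rightarrow> 'v set \<Rightarrow> bool) \<Rightarrow> 'v \<Rightarrow> 'v set \<Rightarrow> 'v set \<Rightarrow> bool" where
  "strict R v a b \<longleftrightarrow> R v a b \<and> \<not> R v b a"

definition pref_ok :: "'v set \<Rightarrow> 'v set set \<Rightarrow> ('v \<Rightarrow> 'v set \<Rightarrow> 'v set \<Rightarrow> bool) \<Rightarrow> bool" where
  "pref_ok V E R \<longleftrightarrow> (\<forall>v\<in>V. let D = inc E v \<union> {{}} in
      (\<forall>a\<in>D. \<forall>b\<in>D. R v a b \<or> R v b a) \<and>
      (\<forall>a\<in>D. \<forall>b\<in>D. \<forall>c\<in>D. R v a b \<longrightarrow> R v b c \<longrightarrow> R v a c) \<and>
      (\<forall>e\<in>inc E v. R v e {} \<and> \<not> R v {} e))"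

definition matching :: "'v set set \<Rightarrow> 'v set set \<Rightarrow> bool" where
  "matching E \<mu> \<longleftrightarrow> \<mu> \<subseteq> E \<and> (\<forall>v. card (inc \<mu> v) \<le> 1)"

definition mu_at :: "'v set set \<Rightarrow> 'v \<Rightarrow> 'v set" where
  "mu_at \<mu> v = (if \<exists>e\<in>\<mu>. v \<in> e then (THE e. e \<in> \<mu> \<and> v \<in> e) else {})"

definition weakly_blocks :: "('v \<Rightarrow> 'v set \<Rightarrow> 'v set \<Rightarrow> bool) \<Rightarrow> 'v set set \<Rightarrow> 'v set \<Rightarrow> bool" where
  "weakly_blocks R \<mu> e \<longleftrightarrow> e \<notin> \<mu> \<and> (\<forall>v\<in>e. R v e (mu_at \<mu> v))"

definition strongly_blocks :: "('v \<Rightarrow> 'v set \<Rightarrow> 'v set \<Rightarrow> bool) \<Rightarrow> 'v set set \<Rightarrow> 'v set \<Rightarrow> bool" where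
  "strongly_blocks R \<mu> e \<longleftrightarrow> weakly_blocks R \<mu> e \<and> (\<exists>w\<in>e. strict R w e (mu_at \<mu> w))"

definition nonuniformly_stable ::
  "'v set set \<Rightarrow> 'v set set \<Rightarrow> ('v \<Rightarrow> 'v set \<Rightarrow> 'v set \<Rightarrow> bool) \<Rightarrow> 'v set set \<Rightarrow> bool" where
  "nonuniformly_stable E1 E2 R \<mu> \<longleftrightarrow> matching (E1 \<union> E2) \<mu> \<and>
     (\<forall>e\<in>E1 - \<mu>. \<not> weakly_blocks R \<mu> e) \<and>
     (\<forall>e\<in>E2 - \<mu>. \<not> strongly_blocks R \<mu> e)"

definition better :: "'v set set \<Rightarrow> ('v \<Rightarrow> 'v set \<Rightarrow> 'v set \<Rightarrow> bool) \<Rightarrow> 'v \<Rightarrow> 'v set \<Rightarrow> 'v set set" where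
  "better E R v e = {f \<in> inc E v. strict R v f e}"

definition indiff :: "'v set set \<Rightarrow> ('v \<Rightarrow> 'v set \<Rightarrow> 'v set \<Rightarrow> bool) \<Rightarrow> 'v \<Rightarrow> 'v set \<Rightarrow> 'v set set" where
  "indiff E R v e = {f \<in> inc E v. R v f e \<and> R v e f}"

text \<open>The polytope S, as a subset of R^E; vectors in R^E are represented as functions
  'v set \<Rightarrow> real vanishing outside E.\<close>
definition S_poly :: "'v set \<Rightarrow> 'v set set \<Rightarrow> 'v set set \<Rightarrow> ('v \<Rightarrow> 'v set \<Rightarrow> 'v set \<Rightarrow> bool)
     \<Rightarrow> ('v set \<Rightarrow> real) set" where
  "S_poly V E1 E2 R = {x.
     (\<forall>e. e \<notin> E1 \<union> E2 \<longrightarrow> x e = 0) \<and>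
     (\<forall>e\<in>E1 \<union> E2. 0 \<le> x e) \<and>
     (\<forall>v\<in>V. sum x (inc (E1 \<union> E2) v) \<le> 1) \<and>
     (\<forall>e\<in>E1. x e + (\<Sum>v\<in>e. sum x (better (E1 \<union> E2) R v e)) \<ge> 1) \<and>
     (\<forall>e\<in>E2. \<forall>v\<in>e. sum x (indiff (E1 \<union> E2) R v e)
                      + (\<Sum>w\<in>e. sum x (better (E1 \<union> E2) R w e)) \<ge> 1)}"

definition extreme_pt :: "('a \<Rightarrow> real) \<Rightarrow> ('a \<Rightarrow> real) set \<Rightarrow> bool" where
  "extreme_pt x P \<longleftrightarrow> x \<in> P \<and>
     (\<forall>y\<in>P. \<forall>z\<in>P. \<forall>t::real. 0 < t \<and> t < 1 \<and> x = (\<lambda>e. t * y e + (1 - t) * z e) \<longrightarrow> y = z)"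

end

theory Submission
  imports Defs
begin

primrec walk :: "('v \<Rightarrow> 'v \<Rightarrow> 'v) \<Rightarrow> 'v \<times> 'v \<Rightarrow> nat \<Rightarrow> 'v \<times> 'v" where
  "walk N s0 0 = s0"
| "walk N s0 (Suc i) = (snd (walk N s0 i), N (fst (walk N s0 i)) (snd (walk N s0 i)))"

locale NU =
  fixes V1 V2 :: "'v set" and E E1 E2 :: "'v set set"
    and R :: "'v \<Rightarrow> 'v set \<Rightarrow> 'v set \<Rightarrow> bool" and x :: "'v set \<Rightarrow> real"
  assumes bip: "bip_graph V1 V2 E" and EE: "E = E1 \<union> E2" and disj: "E1 \<inter> E2 = {}"
    and pref: "pref_ok (V1 \<union> V2) E R" and xS: "x \<in> S_poly (V1 \<union> V2) E1 E2 R"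
begin

definition "bt v e = sum x (better E R v e)"
definition "si v e = sum x (indiff E R v e)"
definition "X v = sum x (inc E v)"

lemma finV: "finite (V1 \<union> V2)" using bip by (auto simp: bip_graph_def)
lemma V12: "V1 \<inter> V2 = {}" using bip by (auto simp: bip_graph_def)

lemma finE: "finite E"
proof -
  have "E \<subseteq> (\<lambda>(a,b). {a,b}) ` (V1 \<times> V2)" using bip by (auto simp: bip_graph_def)
  moreover have "finite ((\<lambda>(a,b). {a,b}) ` (V1 \<times> V2))" using bip by (auto simp: bip_graph_def)
  ultimately show ?thesis by (rule finite_subset)
qed

lemma edge: assumes "e \<in> E" obtains a b where "e = {a,b}" "a \<in> V1" "b \<in> V2" "a \<noteq> b"
proof -
  from assms bip obtain a b where "e = {a,b}" "a \<in> V1" "b \<in> V2" by (auto simp: bip_graph_def)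
  moreover then have "a \<noteq> b" using V12 by auto
  ultimately show ?thesis using that by blast
qed

lemma edgeV: "e \<in> E \<Longrightarrow> v \<in> e \<Longrightarrow> v \<in> V1 \<union> V2"
  by (erule edge) auto

lemma x0: "e \<notin> E \<Longrightarrow> x e = 0" using xS EE by (auto simp: S_poly_def)
lemma xnn: "0 \<le> x e" using xS EE x0 by (cases "e \<in> E") (auto simp: S_poly_def)

lemma finc: "finite (inc E v)" using finE by (auto simp: inc_def)
lemma incsub: "inc E v \<subseteq> E" by (auto simp: inc_def)

lemma Xle1: "X v \<le> 1"
proof (cases "v \<in> V1 \<union> V2")
  case True then show ?thesis using xS unfolding S_poly_def X_def EE[symmetric] by blast
next
  case False then have "inc E v = {}" using edgeV by (auto simp: inc_def)
  then show ?thesis by (simp add: X_def)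
qed

lemma Xnn: "0 \<le> X v" unfolding X_def by (rule sum_nonneg) (simp add: xnn)

lemma incV: "f \<in> inc E v \<Longrightarrow> v \<in> V1 \<union> V2" using edgeV by (auto simp: inc_def)

lemma tot: "f \<in> inc E v \<Longrightarrow> g \<in> inc E v \<Longrightarrow> R v f g \<or> R v g f"
  using pref incV[of f v] unfolding pref_ok_def Let_def by blast

lemma trn: "f \<in> inc E v \<Longrightarrow> g \<in> inc E v \<Longrightarrow> h \<in> inc E v \<Longrightarrow> R v f g \<Longrightarrow> R v g h \<Longrightarrow> R v f h"
  using pref incV[of f v] unfolding pref_ok_def Let_def by blast

lemma Rrefl: "f \<in> inc E v \<Longrightarrow> R v f f" using tot by blast

lemma c1: "e \<in> E1 \<Longrightarrow> x e + (\<Sum>v\<in>e. bt v e) \<ge> 1"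
  using xS unfolding S_poly_def bt_def EE[symmetric] by blast
lemma c2: "e \<in> E2 \<Longrightarrow> v \<in> e \<Longrightarrow> si v e + (\<Sum>w\<in>e. bt w e) \<ge> 1"
  using xS unfolding S_poly_def bt_def si_def EE[symmetric] by blast

lemma better_sub: "better E R v e \<subseteq> inc E v" by (auto simp: better_def)
lemma indiff_sub: "indiff E R v e \<subseteq> inc E v" by (auto simp: indiff_def)

lemma self_indiff: "e \<in> E \<Longrightarrow> v \<in> e \<Longrightarrow> e \<in> indiff E R v e"
  using Rrefl[of e v] by (auto simp: indiff_def inc_def)

lemma si_ge: "e \<in> E \<Longrightarrow> v \<in> e \<Longrightarrow> x e \<le> si v e"
  unfolding si_def using finc self_indiff
  by (intro member_le_sum) (auto simp: xnn intro: finite_subset[OF indiff_sub])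

lemma vertex_count: "(\<Sum>e\<in>inc E v. x e * (2 * bt v e + si v e)) = (X v)^2"
proof -
  let ?I = "inc E v"
  have bt': "bt v e = (\<Sum>f\<in>?I. if strict R v f e then x f else 0)" for e
    unfolding bt_def better_def using finc by (simp add: sum.If_cases Int_def)
  have si': "si v e = (\<Sum>f\<in>?I. if R v f e \<and> R v e f then x f else 0)" for e
    unfolding si_def indiff_def using finc by (simp add: sum.If_cases Int_def)
  have A: "(\<Sum>e\<in>?I. x e * bt v e) = (\<Sum>e\<in>?I. \<Sum>f\<in>?I. if strict R v f e then x e * x f else 0)"
    unfolding bt' by (simp add: sum_distrib_left if_distrib cong: if_cong)
  have B: "(\<Sum>e\<in>?I. \<Sum>f\<in>?I. if strict R v f e then x e * x f else 0)
         = (\<Sum>e\<in>?I. \<Sum>f\<in>?I. if strict R v e f then x e * x f else 0)"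
    by (subst sum.swap) (rule sum.cong[OF refl], rule sum.cong[OF refl], simp add: mult.commute)
  have C: "(\<Sum>e\<in>?I. x e * si v e) = (\<Sum>e\<in>?I. \<Sum>f\<in>?I. if R v f e \<and> R v e f then x e * x f else 0)"
    unfolding si' by (simp add: sum_distrib_left if_distrib cong: if_cong)
  have D: "(\<Sum>e\<in>?I. x e * (2 * bt v e + si v e)) =
     (\<Sum>e\<in>?I. \<Sum>f\<in>?I. (if strict R v f e then x e * x f else 0) + (if strict R v e f then x e * x f else 0)
        + (if R v f e \<and> R v e f then x e * x f else 0))"
  proof -
    have "(\<Sum>e\<in>?I. x e * (2 * bt v e + si v e)) = (\<Sum>e\<in>?I. x e * bt v e) + (\<Sum>e\<in>?I. x e * bt v e) + (\<Sum>e\<in>?I. x e * si v e)"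
      by (simp add: algebra_simps sum.distrib sum_distrib_left)
    also have "\<dots> = (\<Sum>e\<in>?I. \<Sum>f\<in>?I. if strict R v f e then x e * x f else 0) + (\<Sum>e\<in>?I. \<Sum>f\<in>?I. if strict R v e f then x e * x f else 0) + (\<Sum>e\<in>?I. \<Sum>f\<in>?I. if R v f e \<and> R v e f then x e * x f else 0)"
      using A B C by simp
    finally show ?thesis by (simp add: sum.distrib)
  qed
  also have "\<dots> = (\<Sum>e\<in>?I. \<Sum>f\<in>?I. x e * x f)"
  proof (intro sum.cong refl)
    fix e f assume "e \<in> ?I" "f \<in> ?I"
    then show "(if strict R v f e then x e * x f else 0) + (if strict R v e f then x e * x f else 0)
        + (if R v f e \<and> R v e f then x e * x f else 0) = x e * x f"
      using tot[of e v f] by (auto simp: strict_def)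
  qed
  also have "\<dots> = (X v)^2" unfolding X_def power2_eq_square sum_product by simp
  finally show ?thesis .
qed

lemma swapE: "(\<Sum>e\<in>E. \<Sum>v\<in>e. g v e) = (\<Sum>v\<in>V1 \<union> V2. \<Sum>e\<in>inc E v. g v e)"
proof -
  have "(\<Sum>v\<in>V1 \<union> V2. \<Sum>e\<in>{e. e \<in> E \<and> v \<in> e}. g v e) = (\<Sum>e\<in>E. \<Sum>v\<in>{v. v \<in> V1 \<union> V2 \<and> v \<in> e}. g v e)"
    by (rule sum.swap_restrict[OF finV finE])
  moreover have "{v. v \<in> V1 \<union> V2 \<and> v \<in> e} = e" if "e \<in> E" for e using edgeV[OF that] by auto
  ultimately show ?thesis by (simp add: inc_def)
qed

lemma Lge2: "e \<in> E \<Longrightarrow> (\<Sum>v\<in>e. 2 * bt v e + si v e) \<ge> 2"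
proof -
  assume e: "e \<in> E"
  then obtain a b where ab: "e = {a,b}" "a \<in> V1" "b \<in> V2" "a \<noteq> b" by (rule edge)
  show ?thesis
  proof (cases "e \<in> E1")
    case True
    have "x e + (bt a e + bt b e) \<ge> 1" using c1[OF True] ab by simp
    with ab si_ge[OF e, of a] si_ge[OF e, of b] show ?thesis by simp
  next
    case False
    then have "e \<in> E2" using e EE by auto
    with c2[of e a] c2[of e b] ab show ?thesis by auto
  qed
qed

lemma count: "(\<Sum>e\<in>E. x e * (\<Sum>v\<in>e. 2 * bt v e + si v e)) = (\<Sum>v\<in>V1 \<union> V2. (X v)^2)"
proof -
  have "(\<Sum>e\<in>E. x e * (\<Sum>v\<in>e. 2 * bt v e + si v e)) = (\<Sum>e\<in>E. \<Sum>v\<in>e. x e * (2 * bt v e + si v e))"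
    by (simp add: sum_distrib_left)
  also have "\<dots> = (\<Sum>v\<in>V1 \<union> V2. \<Sum>e\<in>inc E v. x e * (2 * bt v e + si v e))" by (rule swapE)
  also have "\<dots> = (\<Sum>v\<in>V1 \<union> V2. (X v)^2)" by (simp add: vertex_count)
  finally show ?thesis .
qed

lemma sumX: "(\<Sum>v\<in>V1 \<union> V2. X v) = 2 * (\<Sum>e\<in>E. x e)"
proof -
  have "(\<Sum>v\<in>V1 \<union> V2. X v) = (\<Sum>e\<in>E. \<Sum>v\<in>e. x e)" unfolding X_def by (rule swapE[symmetric])
  also have "\<dots> = (\<Sum>e\<in>E. 2 * x e)"
  proof (rule sum.cong[OF refl])
    fix e assume "e \<in> E"
    then obtain a b where "e = {a,b}" "a \<noteq> b" by (rule edge)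
    then show "(\<Sum>v\<in>e. x e) = 2 * x e" by simp
  qed
  finally show ?thesis by (simp add: sum_distrib_left)
qed

lemma main_count: "(\<forall>v. X v = 0 \<or> X v = 1) \<and> (\<forall>e\<in>E. 0 < x e \<longrightarrow> (\<Sum>v\<in>e. 2 * bt v e + si v e) = 2)"
proof -
  let ?L = "\<lambda>e. (\<Sum>v\<in>e. 2 * bt v e + si v e)"
  have a: "(\<Sum>e\<in>E. x e * (?L e - 2)) \<ge> 0"
    by (rule sum_nonneg) (use Lge2 xnn in \<open>auto intro: mult_nonneg_nonneg\<close>)
  have b: "(\<Sum>v\<in>V1 \<union> V2. X v - (X v)^2) \<ge> 0"
  proof (rule sum_nonneg)
    fix v have "(X v)^2 \<le> X v" using mult_left_le_one_le[of "X v" "X v"] Xle1[of v] Xnn[of v] by (simp add: power2_eq_square)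
    then show "X v - (X v)^2 \<ge> 0" by simp
  qed
  have eq: "(\<Sum>e\<in>E. x e * (?L e - 2)) + (\<Sum>v\<in>V1 \<union> V2. X v - (X v)^2) = 0"
    using count sumX by (simp add: sum_subtractf right_diff_distrib sum_distrib_left[symmetric] mult.commute sum_distrib_right)
  have z1: "(\<Sum>e\<in>E. x e * (?L e - 2)) = 0" and z2: "(\<Sum>v\<in>V1 \<union> V2. X v - (X v)^2) = 0"
    using a b eq by linarith+
  have t1: "\<forall>e\<in>E. x e * (?L e - 2) = 0"
    using z1 by (subst (asm) sum_nonneg_eq_0_iff) (use finE Lge2 xnn in \<open>auto intro: mult_nonneg_nonneg\<close>)
  have t2: "\<forall>v\<in>V1 \<union> V2. X v - (X v)^2 = 0"
  proof -
    have "\<forall>v\<in>V1 \<union> V2. X v - (X v)^2 \<ge> 0"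
    proof
      fix v have "(X v)^2 \<le> X v" using mult_left_le_one_le[of "X v" "X v"] Xle1[of v] Xnn[of v] by (simp add: power2_eq_square)
      then show "X v - (X v)^2 \<ge> 0" by simp
    qed
    then show ?thesis using z2 finV by (subst (asm) sum_nonneg_eq_0_iff) auto
  qed
  have "X v = 0 \<or> X v = 1" for v
  proof (cases "v \<in> V1 \<union> V2")
    case True
    then have "X v * (1 - X v) = 0" using t2 by (auto simp: power2_eq_square algebra_simps)
    then show ?thesis by auto
  next
    case False then have "inc E v = {}" using edgeV by (auto simp: inc_def)
    then show ?thesis by (simp add: X_def)
  qed
  moreover have "\<forall>e\<in>E. 0 < x e \<longrightarrow> ?L e = 2" using t1 by auto
  ultimately show ?thesis by blast
qed

lemma tight:
  assumes e: "e \<in> E" and pos: "0 < x e" and ab: "e = {u,w}" "u \<in> V1" "w \<in> V2"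
  shows "si u e = si w e" "bt u e + si u e + bt w e = 1" "e \<in> E1 \<Longrightarrow> si u e = x e"
proof -
  have uw: "u \<noteq> w" using ab V12 by auto
  have L: "2 * bt u e + si u e + (2 * bt w e + si w e) = 2" using main_count e pos ab uw by auto
  have su: "si u e \<ge> x e" "si w e \<ge> x e" using si_ge[OF e] ab by auto
  have "si u e = si w e \<and> bt u e + si u e + bt w e = 1 \<and> (e \<in> E1 \<longrightarrow> si u e = x e)"
  proof (cases "e \<in> E1")
    case True
    have "x e + (bt u e + bt w e) \<ge> 1" using c1[OF True] ab uw by simp
    then show ?thesis using L su True by auto
  next
    case False
    then have "e \<in> E2" using e EE by auto
    then have "si u e + (bt u e + bt w e) \<ge> 1" "si w e + (bt u e + bt w e) \<ge> 1"
      using c2[of e u] c2[of e w] ab uw by auto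
    then show ?thesis using L False by auto
  qed
  then show "si u e = si w e" "bt u e + si u e + bt w e = 1" "e \<in> E1 \<Longrightarrow> si u e = x e" by auto
qed

lemma worst:
  assumes "finite D" "D \<noteq> {}" "D \<subseteq> inc E v" shows "\<exists>f0\<in>D. \<forall>f\<in>D. R v f f0"
  using assms
proof (induction D rule: finite_ne_induct)
  case (singleton y) then show ?case using Rrefl by auto
next
  case (insert y F)
  then obtain f0 where f0: "f0 \<in> F" "\<forall>f\<in>F. R v f f0" by auto
  have yi: "y \<in> inc E v" and Fi: "F \<subseteq> inc E v" using insert by auto
  show ?case
  proof (cases "R v y f0")
    case True then show ?thesis using f0 by auto
  next
    case False
    then have "R v f0 y" using tot[of y v f0] yi Fi f0 by auto
    then have "\<forall>f\<in>insert y F. R v f y" using f0 trn[of _ v f0 y] yi Fi Rrefl[OF yi] by blast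
    then show ?thesis by auto
  qed
qed

lemma sum_supp: "finite A \<Longrightarrow> sum x A = sum x {f\<in>A. 0 < x f}"
  by (rule sum.mono_neutral_right) (auto, metis xnn order.not_eq_order_implies_strict)

lemma telescope:
  assumes "finite D" "D \<subseteq> inc E v" "\<forall>f\<in>D. 0 < x f"
    "\<forall>f\<in>D. \<forall>g\<in>inc E v. 0 < x g \<longrightarrow> R v g f \<longrightarrow> g \<in> D"
  shows "(\<Sum>f\<in>D. x f / si v f * (H (bt v f + si v f) - H (bt v f))) = H (sum x D) - H 0"
  using assms
proof (induction "card D" arbitrary: D rule: less_induct)
  case less
  show ?case
  proof (cases "D = {}")
    case True then show ?thesis by simp
  next
    case False
    obtain f0 where f0: "f0 \<in> D" "\<forall>f\<in>D. R v f f0" using worst[OF less(2) False less(3)] by auto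
    have Di: "\<And>f. f \<in> D \<Longrightarrow> f \<in> inc E v" using less(3) by auto
    define T where "T = {f\<in>D. R v f0 f}"
    define D' where "D' = D - T"
    have fT: "finite T" "finite D'" using less(2) by (auto simp: T_def D'_def)
    have f0T: "f0 \<in> T" unfolding T_def using f0(1) Rrefl[OF Di[OF f0(1)]] by blast
    have cardlt: "card D' < card D"
      by (rule psubset_card_mono[OF less(2)]) (use f0T f0(1) in \<open>auto simp: D'_def\<close>)
    have D'cl: "\<forall>f\<in>D'. \<forall>g\<in>inc E v. 0 < x g \<longrightarrow> R v g f \<longrightarrow> g \<in> D'"
    proof (intro ballI impI)
      fix f g assume f: "f \<in> D'" and g: "g \<in> inc E v" "0 < x g" "R v g f"
      then have gD: "g \<in> D" using less(5) by (auto simp: D'_def)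
      have "\<not> R v f0 g"
      proof
        assume "R v f0 g"
        then have "R v f0 f" using trn[of f0 v g f] Di f0(1) g f by (auto simp: D'_def)
        then show False using f by (auto simp: D'_def T_def)
      qed
      then show "g \<in> D'" using gD by (auto simp: D'_def T_def)
    qed
    have IH: "(\<Sum>f\<in>D'. x f / si v f * (H (bt v f + si v f) - H (bt v f))) = H (sum x D') - H 0"
    proof (rule less(1)[OF cardlt fT(2) _ _ D'cl])
      show "D' \<subseteq> inc E v" using less(3) by (auto simp: D'_def)
      show "\<forall>f\<in>D'. 0 < x f" using less(4) by (auto simp: D'_def)
    qed
    have btf0: "bt v f0 = sum x D'"
    proof -
      have "bt v f0 = sum x {f\<in>better E R v f0. 0 < x f}" unfolding bt_def
        by (rule sum_supp) (rule finite_subset[OF better_sub finc])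
      also have "{f\<in>better E R v f0. 0 < x f} = D'"
      proof (intro set_eqI iffI)
        fix f assume "f \<in> {f\<in>better E R v f0. 0 < x f}"
        then have "f \<in> inc E v" "R v f f0" "\<not> R v f0 f" "0 < x f" by (auto simp: better_def strict_def)
        then show "f \<in> D'" using less(5) f0(1) by (auto simp: D'_def T_def)
      next
        fix f assume "f \<in> D'"
        then show "f \<in> {f\<in>better E R v f0. 0 < x f}" using f0 less(4) Di
          by (auto simp: D'_def T_def better_def strict_def)
      qed
      finally show ?thesis .
    qed
    have sif0: "si v f0 = sum x T"
    proof -
      have "si v f0 = sum x {f\<in>indiff E R v f0. 0 < x f}" unfolding si_def
        by (rule sum_supp) (rule finite_subset[OF indiff_sub finc])
      also have "{f\<in>indiff E R v f0. 0 < x f} = T"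
      proof (intro set_eqI iffI)
        fix f assume "f \<in> {f\<in>indiff E R v f0. 0 < x f}"
        then have "f \<in> inc E v" "R v f f0" "R v f0 f" "0 < x f" by (auto simp: indiff_def)
        then show "f \<in> T" using less(5) f0(1) by (auto simp: T_def)
      next
        fix f assume "f \<in> T"
        then show "f \<in> {f\<in>indiff E R v f0. 0 < x f}" using f0 less(4) Di
          by (auto simp: T_def indiff_def)
      qed
      finally show ?thesis .
    qed
    have same: "better E R v f = better E R v f0 \<and> indiff E R v f = indiff E R v f0" if "f \<in> T" for f
    proof -
      have fi: "f \<in> inc E v" and a: "R v f f0" and b: "R v f0 f" using that f0 Di by (auto simp: T_def)
      have f0i: "f0 \<in> inc E v" using Di f0(1) by auto
      show ?thesis unfolding better_def indiff_def strict_def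
        using trn[OF _ fi f0i _ a] trn[OF _ f0i fi _ b] trn[OF fi f0i _ a] trn[OF f0i fi _ b] by blast
    qed
    have s0pos: "si v f0 > 0"
    proof -
      have "x f0 \<le> sum x T" using fT(1) f0T by (intro member_le_sum) (auto simp: xnn)
      then show ?thesis using sif0 less(4) f0(1) by auto
    qed
    have sumT: "(\<Sum>f\<in>T. x f / si v f * (H (bt v f + si v f) - H (bt v f))) = H (bt v f0 + si v f0) - H (bt v f0)"
    proof -
      have "(\<Sum>f\<in>T. x f / si v f * (H (bt v f + si v f) - H (bt v f)))
          = (\<Sum>f\<in>T. x f * ((H (bt v f0 + si v f0) - H (bt v f0)) / si v f0))"
        using same by (intro sum.cong refl) (simp add: bt_def si_def)
      also have "\<dots> = sum x T * ((H (bt v f0 + si v f0) - H (bt v f0)) / si v f0)"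
        by (rule sum_distrib_right[symmetric])
      finally show ?thesis using sif0 s0pos by simp
    qed
    have DU: "D = D' \<union> T" "D' \<inter> T = {}" using T_def D'_def by auto
    have "(\<Sum>f\<in>D. x f / si v f * (H (bt v f + si v f) - H (bt v f)))
        = (\<Sum>f\<in>D'. x f / si v f * (H (bt v f + si v f) - H (bt v f)))
          + (\<Sum>f\<in>T. x f / si v f * (H (bt v f + si v f) - H (bt v f)))"
      by (subst DU(1), rule sum.union_disjoint) (use fT DU in auto)
    also have "\<dots> = H (sum x D) - H 0"
      using IH sumT btf0 sif0 DU fT by (simp add: sum.union_disjoint)
    finally show ?thesis .
  qed
qed

definition "uof e = (SOME a. a \<in> e \<and> a \<in> V1)"

lemma uof: assumes "e = {a,b}" "a \<in> V1" "b \<in> V2" shows "uof e = a"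
proof -
  have "b \<notin> V1" using assms V12 by auto
  then show ?thesis unfolding uof_def using assms by (intro some_equality) auto
qed

definition "G \<alpha> \<beta> t = min (max t \<alpha>) (\<beta>::real)"
definition "Hv \<alpha> \<beta> v t = (if v \<in> V1 then G \<alpha> \<beta> t else - G \<alpha> \<beta> (1 - t))"
definition "yv \<alpha> \<beta> e = (if 0 < x e then x e / si (uof e) e *
    (G \<alpha> \<beta> (bt (uof e) e + si (uof e) e) - G \<alpha> \<beta> (bt (uof e) e)) / (\<beta> - \<alpha>) else 0)"

lemma G_mono: "s \<le> t \<Longrightarrow> G \<alpha> \<beta> s \<le> G \<alpha> \<beta> t" by (auto simp: G_def)

lemma bt_nn: "0 \<le> bt v e" unfolding bt_def by (rule sum_nonneg) (simp add: xnn)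
lemma si_nn: "0 \<le> si v e" unfolding si_def by (rule sum_nonneg) (simp add: xnn)

lemma bs_le: "bt v e + si v e \<le> X v"
proof -
  have d: "better E R v e \<inter> indiff E R v e = {}" by (auto simp: better_def indiff_def strict_def)
  have f: "finite (better E R v e)" "finite (indiff E R v e)"
    using finite_subset[OF better_sub finc] finite_subset[OF indiff_sub finc] by auto
  have "bt v e + si v e = sum x (better E R v e \<union> indiff E R v e)"
    unfolding bt_def si_def by (rule sum.union_disjoint[symmetric]) (use f d in auto)
  also have "\<dots> \<le> X v" unfolding X_def
    by (rule sum_mono2[OF finc]) (auto simp: xnn better_def indiff_def)
  finally show ?thesis .
qed

lemma yv_at:
  assumes f: "f \<in> inc E v" and pos: "0 < x f"
  shows "yv \<alpha> \<beta> f = x f / si v f * (Hv \<alpha> \<beta> v (bt v f + si v f) - Hv \<alpha> \<beta> v (bt v f)) / (\<beta> - \<alpha>)"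
proof -
  have fE: "f \<in> E" and vf: "v \<in> f" using f by (auto simp: inc_def)
  obtain u w where uw: "f = {u,w}" "u \<in> V1" "w \<in> V2" "u \<noteq> w" using edge[OF fE] by blast
  have uo: "uof f = u" by (rule uof[OF uw(1-3)])
  have wn: "w \<notin> V1" using uw V12 by auto
  show ?thesis
  proof (cases "v = u")
    case True then show ?thesis using pos uo uw by (simp add: yv_def Hv_def)
  next
    case False
    then have vw: "v = w" using vf uw by auto
    have t1: "si u f = si w f" and t2: "bt u f + si u f + bt w f = 1" using tight[OF fE pos uw(1-3)] by auto
    have a: "1 - (bt w f + si w f) = bt u f" "1 - bt w f = bt u f + si u f" using t1 t2 by linarith+
    have e1: "G \<alpha> \<beta> (1 - (bt w f + si w f)) = G \<alpha> \<beta> (bt u f)" using a(1) by simp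
    have e2: "G \<alpha> \<beta> (1 - bt w f) = G \<alpha> \<beta> (bt u f + si u f)" using a(2) by simp
    have "Hv \<alpha> \<beta> v (bt v f + si v f) - Hv \<alpha> \<beta> v (bt v f) = G \<alpha> \<beta> (bt u f + si u f) - G \<alpha> \<beta> (bt u f)"
      unfolding Hv_def using vw wn e1 e2 by simp
    then show ?thesis using pos uo vw t1 by (simp add: yv_def)
  qed
qed

lemma yv_off: "\<not> 0 < x e \<Longrightarrow> yv \<alpha> \<beta> e = 0" by (simp add: yv_def)

lemma down_sum:
  assumes W: "W \<subseteq> inc E v" and cl: "\<forall>f\<in>W. \<forall>g\<in>inc E v. R v g f \<longrightarrow> g \<in> W"
  shows "sum (yv \<alpha> \<beta>) W = (Hv \<alpha> \<beta> v (sum x W) - Hv \<alpha> \<beta> v 0) / (\<beta> - \<alpha>)"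
proof -
  let ?D = "{f\<in>W. 0 < x f}"
  have fW: "finite W" using finite_subset[OF W finc] .
  have "sum (yv \<alpha> \<beta>) W = sum (yv \<alpha> \<beta>) ?D"
    by (rule sum.mono_neutral_right[OF fW]) (auto simp: yv_off)
  also have "\<dots> = (\<Sum>f\<in>?D. x f / si v f * (Hv \<alpha> \<beta> v (bt v f + si v f) - Hv \<alpha> \<beta> v (bt v f)) / (\<beta> - \<alpha>))"
    by (rule sum.cong[OF refl]) (use W yv_at in auto)
  also have "\<dots> = (\<Sum>f\<in>?D. x f / si v f * (Hv \<alpha> \<beta> v (bt v f + si v f) - Hv \<alpha> \<beta> v (bt v f))) / (\<beta> - \<alpha>)"
    by (simp add: sum_divide_distrib)
  also have "(\<Sum>f\<in>?D. x f / si v f * (Hv \<alpha> \<beta> v (bt v f + si v f) - Hv \<alpha> \<beta> v (bt v f))) = Hv \<alpha> \<beta> v (sum x ?D) - Hv \<alpha> \<beta> v 0"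
    by (rule telescope) (use fW W cl in auto)
  also have "sum x ?D = sum x W" using sum_supp[OF fW] by simp
  finally show ?thesis .
qed

lemma better_sum: assumes "e \<in> inc E v"
  shows "sum (yv \<alpha> \<beta>) (better E R v e) = (Hv \<alpha> \<beta> v (bt v e) - Hv \<alpha> \<beta> v 0) / (\<beta> - \<alpha>)"
  unfolding bt_def
proof (rule down_sum[OF better_sub])
  show "\<forall>f\<in>better E R v e. \<forall>g\<in>inc E v. R v g f \<longrightarrow> g \<in> better E R v e"
  proof (intro ballI impI)
    fix f g assume f: "f \<in> better E R v e" and g: "g \<in> inc E v" "R v g f"
    then have fi: "f \<in> inc E v" "R v f e" "\<not> R v e f" by (auto simp: better_def strict_def)
    have "R v g e" using trn[OF g(1) fi(1) assms g(2) fi(2)] .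
    moreover have "\<not> R v e g" using trn[OF assms g(1) fi(1) _ g(2)] fi(3) by blast
    ultimately show "g \<in> better E R v e" using g by (auto simp: better_def strict_def)
  qed
qed

lemma weak_sum: assumes "e \<in> inc E v"
  shows "sum (yv \<alpha> \<beta>) {f\<in>inc E v. R v f e} = (Hv \<alpha> \<beta> v (bt v e + si v e) - Hv \<alpha> \<beta> v 0) / (\<beta> - \<alpha>)"
proof -
  let ?W = "{f\<in>inc E v. R v f e}"
  have "?W = better E R v e \<union> indiff E R v e" by (auto simp: better_def indiff_def strict_def)
  moreover have "better E R v e \<inter> indiff E R v e = {}" by (auto simp: better_def indiff_def strict_def)
  moreover have f: "finite (better E R v e)" "finite (indiff E R v e)"
    using finite_subset[OF better_sub finc] finite_subset[OF indiff_sub finc] by auto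
  ultimately have sx: "sum x ?W = bt v e + si v e" unfolding bt_def si_def by (simp add: sum.union_disjoint)
  have "sum (yv \<alpha> \<beta>) ?W = (Hv \<alpha> \<beta> v (sum x ?W) - Hv \<alpha> \<beta> v 0) / (\<beta> - \<alpha>)"
    by (rule down_sum) (auto intro: trn[OF _ _ assms])
  then show ?thesis using sx by simp
qed

lemma indiff_sum: assumes "e \<in> inc E v"
  shows "sum (yv \<alpha> \<beta>) (indiff E R v e) = (Hv \<alpha> \<beta> v (bt v e + si v e) - Hv \<alpha> \<beta> v (bt v e)) / (\<beta> - \<alpha>)"
proof -
  let ?W = "{f\<in>inc E v. R v f e}"
  have "?W = better E R v e \<union> indiff E R v e" by (auto simp: better_def indiff_def strict_def)
  moreover have "better E R v e \<inter> indiff E R v e = {}" by (auto simp: better_def indiff_def strict_def)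
  moreover have f: "finite (better E R v e)" "finite (indiff E R v e)"
    using finite_subset[OF better_sub finc] finite_subset[OF indiff_sub finc] by auto
  ultimately have "sum (yv \<alpha> \<beta>) ?W = sum (yv \<alpha> \<beta>) (better E R v e) + sum (yv \<alpha> \<beta>) (indiff E R v e)"
    by (simp add: sum.union_disjoint)
  then show ?thesis using weak_sum[OF assms] better_sum[OF assms] by (simp add: diff_divide_distrib)
qed

lemma deg_sum: "sum (yv \<alpha> \<beta>) (inc E v) = (Hv \<alpha> \<beta> v (X v) - Hv \<alpha> \<beta> v 0) / (\<beta> - \<alpha>)"
  unfolding X_def by (rule down_sum) auto

lemma yS: assumes ab: "0 \<le> \<alpha>" "\<alpha> < \<beta>" "\<beta> \<le> 1"
  shows "yv \<alpha> \<beta> \<in> S_poly (V1 \<union> V2) E1 E2 R"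
proof -
  let ?y = "yv \<alpha> \<beta>"
  let ?G = "G \<alpha> \<beta>"
  have D: "0 < \<beta> - \<alpha>" using ab by simp
  have G0: "?G 0 = \<alpha>" and G1: "?G 1 = \<beta>" using ab by (auto simp: G_def)
  have off: "\<forall>e. e \<notin> E1 \<union> E2 \<longrightarrow> ?y e = 0"
  proof (intro allI impI)
    fix e assume "e \<notin> E1 \<union> E2"
    then have "x e = 0" using x0 EE by blast
    then show "?y e = 0" by (simp add: yv_off)
  qed
  have nn: "\<forall>e\<in>E1 \<union> E2. 0 \<le> ?y e"
  proof
    fix e assume "e \<in> E1 \<union> E2"
    then have e: "e \<in> E" using EE by simp
    show "0 \<le> ?y e"
    proof (cases "0 < x e")
      case True
      obtain u w where uw: "e = {u,w}" "u \<in> V1" "w \<in> V2" "u \<noteq> w" using edge[OF e] by blast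
      have "si u e \<ge> x e" using si_ge[OF e] uw by auto
      moreover have "?G (bt u e) \<le> ?G (bt u e + si u e)" using si_nn by (intro G_mono) auto
      ultimately show ?thesis using True D uof[OF uw(1-3)] by (auto simp: yv_def intro!: divide_nonneg_pos mult_nonneg_nonneg)
    qed (simp add: yv_off)
  qed
  have deg: "\<forall>v\<in>V1 \<union> V2. sum ?y (inc (E1 \<union> E2) v) \<le> 1"
  proof
    fix v
    have "X v = 0 \<or> X v = 1" using main_count by blast
    then have "Hv \<alpha> \<beta> v (X v) - Hv \<alpha> \<beta> v 0 \<le> \<beta> - \<alpha>" using G0 G1 ab by (auto simp: Hv_def)
    then show "sum ?y (inc (E1 \<union> E2) v) \<le> 1" using deg_sum[of \<alpha> \<beta> v] D EE by simp
  qed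
  have st: "(e \<in> E1 \<longrightarrow> ?y e + (\<Sum>v\<in>e. sum ?y (better E R v e)) \<ge> 1) \<and>
            (e \<in> E2 \<longrightarrow> (\<forall>v\<in>e. sum ?y (indiff E R v e) + (\<Sum>w\<in>e. sum ?y (better E R w e)) \<ge> 1))"
    if e: "e \<in> E" for e
  proof -
    obtain u w where uw: "e = {u,w}" "u \<in> V1" "w \<in> V2" "u \<noteq> w" using edge[OF e] by blast
    have wn: "w \<notin> V1" using uw V12 by auto
    have eu: "e \<in> inc E u" and ew: "e \<in> inc E w" using e uw by (auto simp: inc_def)
    have bu: "sum ?y (better E R u e) = (?G (bt u e) - \<alpha>) / (\<beta> - \<alpha>)"
      using better_sum[OF eu, of \<alpha> \<beta>] uw G0 by (simp add: Hv_def)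
    have bw: "sum ?y (better E R w e) = (\<beta> - ?G (1 - bt w e)) / (\<beta> - \<alpha>)"
      using better_sum[OF ew, of \<alpha> \<beta>] wn G1 by (simp add: Hv_def)
    have su: "sum ?y (indiff E R u e) = (?G (bt u e + si u e) - ?G (bt u e)) / (\<beta> - \<alpha>)"
      using indiff_sum[OF eu, of \<alpha> \<beta>] uw by (simp add: Hv_def)
    have sw: "sum ?y (indiff E R w e) = (?G (1 - bt w e) - ?G (1 - (bt w e + si w e))) / (\<beta> - \<alpha>)"
      using indiff_sum[OF ew, of \<alpha> \<beta>] wn by (simp add: Hv_def)
    have bsum: "(\<Sum>v\<in>e. sum ?y (better E R v e)) = (?G (bt u e) - \<alpha> + (\<beta> - ?G (1 - bt w e))) / (\<beta> - \<alpha>)"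
      using uw bu bw by (simp add: add_divide_distrib)
    have A: "?y e + (\<Sum>v\<in>e. sum ?y (better E R v e)) \<ge> 1" if E1: "e \<in> E1"
    proof (cases "0 < x e")
      case True
      have t: "si u e = x e" "bt u e + si u e + bt w e = 1" using tight[OF e True uw(1-3)] E1 by auto
      have "?y e = (?G (1 - bt w e) - ?G (bt u e)) / (\<beta> - \<alpha>)"
      proof -
        have "bt u e + si u e = 1 - bt w e" using t by linarith
        then have "?G (bt u e + si u e) = ?G (1 - bt w e)" by simp
        then show ?thesis using True t(1) uof[OF uw(1-3)] by (simp add: yv_def)
      qed
      then have "?y e + (\<Sum>v\<in>e. sum ?y (better E R v e)) = (\<beta> - \<alpha>) / (\<beta> - \<alpha>)"
        using bsum by (simp add: add_divide_distrib[symmetric])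
      then show ?thesis using D by simp
    next
      case False
      have "x e + (bt u e + bt w e) \<ge> 1" using c1[OF E1] uw by simp
      then have "bt u e \<ge> 1 - bt w e" using False xnn[of e] by linarith
      then have "?G (bt u e) \<ge> ?G (1 - bt w e)" by (rule G_mono)
      then have "1 \<le> (?G (bt u e) - \<alpha> + (\<beta> - ?G (1 - bt w e))) / (\<beta> - \<alpha>)"
        using D by (simp add: le_divide_eq_1_pos)
      then show ?thesis using bsum False by (simp add: yv_off)
    qed
    have B: "sum ?y (indiff E R v e) + (\<Sum>w\<in>e. sum ?y (better E R w e)) \<ge> 1" if E2: "e \<in> E2" and v: "v \<in> e" for v
    proof -
      have cu: "si u e + (bt u e + bt w e) \<ge> 1" and cw: "si w e + (bt u e + bt w e) \<ge> 1"
        using c2[OF E2, of u] c2[OF E2, of w] uw by auto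
      show ?thesis
      proof (cases "v = u")
        case True
        have "bt u e + si u e \<ge> 1 - bt w e" using cu by linarith
        then have g: "?G (bt u e + si u e) \<ge> ?G (1 - bt w e)" by (rule G_mono)
        have "sum ?y (indiff E R v e) + (\<Sum>w\<in>e. sum ?y (better E R w e))
           = (?G (bt u e + si u e) - ?G (bt u e) + (?G (bt u e) - \<alpha> + (\<beta> - ?G (1 - bt w e)))) / (\<beta> - \<alpha>)"
          using True su bsum D by (simp add: field_simps)
        moreover have "1 \<le> (?G (bt u e + si u e) - ?G (bt u e) + (?G (bt u e) - \<alpha> + (\<beta> - ?G (1 - bt w e)))) / (\<beta> - \<alpha>)"
          using D g by (simp add: le_divide_eq_1_pos)
        ultimately show ?thesis by simp
      next
        case False
        then have vw: "v = w" using v uw by auto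
        have "bt u e \<ge> 1 - (bt w e + si w e)" using cw by linarith
        then have g: "?G (bt u e) \<ge> ?G (1 - (bt w e + si w e))" by (rule G_mono)
        have "sum ?y (indiff E R v e) + (\<Sum>w\<in>e. sum ?y (better E R w e))
           = (?G (1 - bt w e) - ?G (1 - (bt w e + si w e)) + (?G (bt u e) - \<alpha> + (\<beta> - ?G (1 - bt w e)))) / (\<beta> - \<alpha>)"
          using vw sw bsum D by (simp add: field_simps)
        moreover have "1 \<le> (?G (1 - bt w e) - ?G (1 - (bt w e + si w e)) + (?G (bt u e) - \<alpha> + (\<beta> - ?G (1 - bt w e)))) / (\<beta> - \<alpha>)"
          using D g by (simp add: le_divide_eq_1_pos)
        ultimately show ?thesis by simp
      qed
    qed
    show ?thesis using A B by blast
  qed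
  show ?thesis unfolding S_poly_def EE[symmetric]
    using off nn deg st EE by auto
qed

lemma Gsum: "0 \<le> t \<Longrightarrow> t \<le> 1 \<Longrightarrow> 0 < \<theta> \<Longrightarrow> \<theta> < 1 \<Longrightarrow> G 0 \<theta> t + G \<theta> 1 t = t + \<theta>"
  by (auto simp: G_def min_def max_def)

lemma convex_split:
  assumes th: "0 < \<theta>" "\<theta> < 1"
  shows "x = (\<lambda>e. \<theta> * yv 0 \<theta> e + (1 - \<theta>) * yv \<theta> 1 e)"
proof
  fix e
  show "x e = \<theta> * yv 0 \<theta> e + (1 - \<theta>) * yv \<theta> 1 e"
  proof (cases "0 < x e")
    case False
    then have "x e = 0" using xnn[of e] by simp
    then show ?thesis by (simp add: yv_off)
  next
    case True
    then have e: "e \<in> E" using x0 by force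
    obtain u w where uw: "e = {u,w}" "u \<in> V1" "w \<in> V2" "u \<noteq> w" using edge[OF e] by blast
    have uo: "uof e = u" by (rule uof[OF uw(1-3)])
    define b where "b = bt u e"
    define s where "s = si u e"
    have sp: "s > 0" using si_ge[OF e, of u] uw True by (auto simp: s_def)
    have b0: "0 \<le> b" using bt_nn by (simp add: b_def)
    have bs1: "b + s \<le> 1" using bs_le[of u e] Xle1[of u] by (simp add: b_def s_def)
    have g1: "G 0 \<theta> (b + s) + G \<theta> 1 (b + s) = b + s + \<theta>" using Gsum b0 sp bs1 th by auto
    have g2: "G 0 \<theta> b + G \<theta> 1 b = b + \<theta>" using Gsum b0 sp bs1 th by auto
    have "\<theta> * yv 0 \<theta> e + (1 - \<theta>) * yv \<theta> 1 e
        = x e / s * ((G 0 \<theta> (b + s) + G \<theta> 1 (b + s)) - (G 0 \<theta> b + G \<theta> 1 b))"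
    proof -
      have y1: "yv 0 \<theta> e = x e / s * (G 0 \<theta> (b + s) - G 0 \<theta> b) / \<theta>"
        using True uo by (simp add: yv_def b_def s_def)
      have y2: "yv \<theta> 1 e = x e / s * (G \<theta> 1 (b + s) - G \<theta> 1 b) / (1 - \<theta>)"
        using True uo by (simp add: yv_def b_def s_def)
      have "\<theta> * yv 0 \<theta> e = x e / s * (G 0 \<theta> (b + s) - G 0 \<theta> b)" using y1 th by simp
      moreover have "(1 - \<theta>) * yv \<theta> 1 e = x e / s * (G \<theta> 1 (b + s) - G \<theta> 1 b)" using y2 th by simp
      ultimately show ?thesis by (simp add: algebra_simps)
    qed
    also have "\<dots> = x e" using g1 g2 sp by simp
    finally show ?thesis by simp
  qed
qed

lemma split_contra:
  assumes ext: "extreme_pt x (S_poly (V1 \<union> V2) E1 E2 R)"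
    and f: "f \<in> E" "0 < x f" and u: "u = uof f"
    and brk: "0 < bt u f \<or> bt u f + si u f < 1"
  shows False
proof -
  obtain u' w where uw: "f = {u',w}" "u' \<in> V1" "w \<in> V2" "u' \<noteq> w" using edge[OF f(1)] by blast
  have uu: "u = u'" using uof[OF uw(1-3)] u by simp
  define b where "b = bt u f"
  define s where "s = si u f"
  have sp: "s > 0" using si_ge[OF f(1), of u] uw uu f(2) by (auto simp: s_def)
  have b0: "0 \<le> b" using bt_nn by (simp add: b_def)
  have bs1: "b + s \<le> 1" using bs_le[of u f] Xle1[of u] by (simp add: b_def s_def)
  define \<theta> where "\<theta> = (if 0 < b then b else b + s)"
  have th: "0 < \<theta>" "\<theta> < 1" using brk sp b0 bs1 by (auto simp: \<theta>_def b_def s_def)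
  have yS1: "yv 0 \<theta> \<in> S_poly (V1 \<union> V2) E1 E2 R" by (rule yS) (use th in auto)
  have yS2: "yv \<theta> 1 \<in> S_poly (V1 \<union> V2) E1 E2 R" by (rule yS) (use th in auto)
  have "yv 0 \<theta> = yv \<theta> 1"
    using ext yS1 yS2 th convex_split[OF th] unfolding extreme_pt_def by blast
  then have eq: "yv 0 \<theta> f = yv \<theta> 1 f" by simp
  have yf: "yv \<alpha> \<beta> f = x f / s * (G \<alpha> \<beta> (b + s) - G \<alpha> \<beta> b) / (\<beta> - \<alpha>)" for \<alpha> \<beta>
    using f(2) u by (simp add: yv_def b_def s_def)
  show False
  proof (cases "0 < b")
    case True
    then have t: "\<theta> = b" by (simp add: \<theta>_def)
    have "yv 0 \<theta> f = 0" using yf[of 0 \<theta>] t sp True by (simp add: G_def)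
    moreover have "yv \<theta> 1 f > 0" using yf[of \<theta> 1] t sp True bs1 th f(2) by (simp add: G_def)
    ultimately show False using eq by simp
  next
    case False
    then have t: "\<theta> = b + s" by (simp add: \<theta>_def)
    have "yv \<theta> 1 f = 0" using yf[of \<theta> 1] t sp b0 by (simp add: G_def)
    moreover have "yv 0 \<theta> f > 0" using yf[of 0 \<theta>] t sp b0 th f(2) by (simp add: G_def)
    ultimately show False using eq by simp
  qed
qed

lemma cycle_d:
  assumes FE: "F \<subseteq> E" and Fne: "F \<noteq> {}" and deg2: "\<forall>e\<in>F. \<forall>v\<in>e. \<exists>f\<in>F. f \<noteq> e \<and> v \<in> f"
  shows "\<exists>d. (\<forall>e. e \<notin> F \<longrightarrow> d e = 0) \<and> (\<forall>v. sum d (inc E v) = (0::real)) \<and> (\<exists>e. d e \<noteq> 0)"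
proof -
  obtain e0 where e0: "e0 \<in> F" using Fne by auto
  have e0E: "e0 \<in> E" using e0 FE by auto
  obtain a b where ab: "e0 = {a,b}" "a \<in> V1" "b \<in> V2" "a \<noteq> b" by (rule edge[OF e0E])
  have nxt: "\<exists>n. {c,n} \<in> F \<and> n \<noteq> p" if pc: "{p,c} \<in> F" for p c
  proof -
    have "c \<in> {p,c}" by simp
    then obtain f where f: "f \<in> F" "f \<noteq> {p,c}" "c \<in> f" using deg2 pc by meson
    have fE: "f \<in> E" using f FE by auto
    obtain a' b' where ab': "f = {a',b'}" by (rule edge[OF fE])
    have "\<exists>n. f = {c,n}" using f(3) ab' by auto
    then obtain n where fn: "f = {c,n}" by blast
    then have "n \<noteq> p" using f(2) by auto
    then show ?thesis using fn f(1) by blast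
  qed
  define N where "N p c = (SOME n. {c,n} \<in> F \<and> n \<noteq> p)" for p c
  have Nok: "{c, N p c} \<in> F \<and> N p c \<noteq> p" if "{p,c} \<in> F" for p c
    unfolding N_def by (rule someI_ex[OF nxt[OF that]])
  define s where "s i = fst (walk N (a,b) i)" for i
  have inv: "{fst (walk N (a,b) i), snd (walk N (a,b) i)} \<in> F" for i
  proof (induction i)
    case 0 show ?case using e0 ab by simp
  next
    case (Suc i) show ?case using conjunct1[OF Nok[OF Suc.IH]] by simp
  qed
  have sS: "snd (walk N (a,b) i) = s (Suc i)" for i by (simp add: s_def)
  have edgeF: "{s i, s (Suc i)} \<in> F" for i using inv[of i] by (simp add: s_def)
  have nb: "s (Suc (Suc i)) \<noteq> s i" for i
    using Nok[OF inv[of i]] by (simp add: s_def)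
  have side: "s i \<in> V1 \<longleftrightarrow> s (Suc i) \<notin> V1" for i
  proof -
    have eE: "{s i, s (Suc i)} \<in> E" using edgeF[of i] FE by blast
    obtain a' b' where ab': "{s i, s (Suc i)} = {a',b'}" "a' \<in> V1" "b' \<in> V2" "a' \<noteq> b'"
      by (rule edge[OF eE])
    have "b' \<notin> V1" using ab' V12 by blast
    then show ?thesis using ab' by (auto simp: doubleton_eq_iff)
  qed
  have neq: "s i \<noteq> s (Suc i)" for i using side[of i] by auto
  have sV: "s i \<in> V1 \<union> V2" for i using edgeV[of "{s i, s (Suc i)}" "s i"] edgeF[of i] FE by auto
  have "\<not> inj_on s {0..card (V1 \<union> V2)}"
  proof
    assume "inj_on s {0..card (V1 \<union> V2)}"
    then have "card (s ` {0..card (V1 \<union> V2)}) = card {0..card (V1 \<union> V2)}" by (rule card_image)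
    moreover have "card (s ` {0..card (V1 \<union> V2)}) \<le> card (V1 \<union> V2)"
      by (rule card_mono[OF finV]) (use sV in auto)
    ultimately show False by simp
  qed
  then obtain i1 j1 where "i1 \<noteq> j1" "s i1 = s j1" unfolding inj_on_def by blast
  then have exP: "\<exists>j. \<exists>i<j. s i = s j" by (metis linorder_neqE_nat)
  define j0 where "j0 = (LEAST j. \<exists>i<j. s i = s j)"
  have Pj0: "\<exists>i<j0. s i = s j0" unfolding j0_def by (rule LeastI_ex[OF exP])
  have minj: "\<not> (\<exists>i<j. s i = s j)" if "j < j0" for j
    using not_less_Least[of j "\<lambda>j. \<exists>i<j. s i = s j"] that unfolding j0_def by blast
  obtain i0 where i0: "i0 < j0" "s i0 = s j0" using Pj0 by blast
  define n where "n = j0 - i0"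
  define c where "c k = s (i0 + k)" for k
  have cn: "c n = c 0" using i0 by (simp add: c_def n_def)
  have cinj: "c p \<noteq> c q" if "p < q" "q < n" for p q
    using minj[of "i0 + q"] that by (auto simp: c_def n_def)
  have n1: "n \<noteq> 1"
  proof
    assume "n = 1"
    then have "j0 = Suc i0" using i0 by (simp add: n_def)
    then show False using neq[of i0] i0 by simp
  qed
  have n2: "n \<noteq> 2"
  proof
    assume "n = 2"
    then have "j0 = Suc (Suc i0)" using i0 by (simp add: n_def)
    then show False using nb[of i0] i0 by simp
  qed
  have n3: "n \<ge> 3" using n1 n2 i0 by (simp add: n_def)
  have par: "c k \<in> V1 \<longleftrightarrow> (c 0 \<in> V1 \<longleftrightarrow> even k)" for k
  proof (induction k)
    case (Suc k)
    have "c (Suc k) \<in> V1 \<longleftrightarrow> c k \<notin> V1" using side[of "i0+k"] by (simp add: c_def)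
    then show ?case using Suc.IH by simp
  qed simp
  have evn: "even n" using par[of n] cn by auto
  have cneq: "c k \<noteq> c (Suc k)" for k using neq by (simp add: c_def)
  have cF: "{c k, c (Suc k)} \<in> F" for k using edgeF by (simp add: c_def)
  define d where "d e = (\<Sum>k<n. (-1)^k * (if e = {c k, c (Suc k)} then 1 else 0::real))" for e
  have dF: "\<forall>e. e \<notin> F \<longrightarrow> d e = 0"
    using cF by (auto simp: d_def intro!: sum.neutral)
  have ddeg: "sum d (inc E v) = 0" for v
  proof -
    define g where "g k = (-1)^k * (if v = c k then 1 else 0::real)" for k
    have "sum d (inc E v) = (\<Sum>k<n. \<Sum>e\<in>inc E v. (-1)^k * (if e = {c k, c (Suc k)} then 1 else 0::real))"
      unfolding d_def by (rule sum.swap)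
    also have "\<dots> = (\<Sum>k<n. (-1)^k * (if {c k, c (Suc k)} \<in> inc E v then 1 else 0::real))"
      by (rule sum.cong[OF refl]) (simp add: sum_distrib_left[symmetric] finc)
    also have "\<dots> = (\<Sum>k<n. g k - g (Suc k))"
    proof (rule sum.cong[OF refl])
      fix k
      have "{c k, c (Suc k)} \<in> E" using cF FE by auto
      then have "({c k, c (Suc k)} \<in> inc E v) = (v = c k \<or> v = c (Suc k))" by (auto simp: inc_def)
      then show "(-1)^k * (if {c k, c (Suc k)} \<in> inc E v then 1 else 0::real) = g k - g (Suc k)"
        using cneq[of k] by (auto simp: g_def)
    qed
    also have "\<dots> = (\<Sum>k<n. g k) - (\<Sum>k<n. g (Suc k))" by (rule sum_subtractf)
    also have "(\<Sum>k<n. g (Suc k)) = (\<Sum>k<n. g k)"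
    proof -
      have "(\<Sum>k<Suc n. g k) = g 0 + (\<Sum>k<n. g (Suc k))" by (rule sum.lessThan_Suc_shift)
      moreover have "(\<Sum>k<Suc n. g k) = (\<Sum>k<n. g k) + g n" by simp
      moreover have "g n = g 0" using cn evn by (simp add: g_def)
      ultimately show ?thesis by simp
    qed
    finally show ?thesis by simp
  qed
  have "d {c 0, c 1} = 1"
  proof -
    have "(if {c 0, c 1} = {c k, c (Suc k)} then 1 else 0::real) = (if k = 0 then 1 else 0)" if "k < n" for k
    proof (cases "k = 0")
      case False
      have "{c 0, c 1} \<noteq> {c k, c (Suc k)}"
      proof
        assume h: "{c 0, c 1} = {c k, c (Suc k)}"
        then have "c k = c 0 \<or> c k = c 1" by auto
        moreover have "c k \<noteq> c 0" using cinj[of 0 k] False that by auto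
        ultimately have ck: "c k = c 1" by simp
        have k1: "k = 1"
        proof (rule ccontr)
          assume "k \<noteq> 1"
          then show False using ck cinj[of 1 k] cinj[of k 1] False that by (cases "k < 1") auto
        qed
        then have "c 2 = c 0 \<or> c 2 = c 1" using h by (auto simp: doubleton_eq_iff numeral_2_eq_2)
        moreover have "c 2 \<noteq> c 0" using nb[of i0] by (simp add: c_def numeral_2_eq_2)
        moreover have "c 2 \<noteq> c 1" using cneq[of 1] by (simp add: numeral_2_eq_2)
        ultimately show False by simp
      qed
      then show ?thesis using False by simp
    qed simp
    then have "d {c 0, c 1} = (\<Sum>k<n. (-1)^k * (if k = 0 then 1 else 0::real))"
      unfolding d_def by (intro sum.cong refl) simp
    also have "\<dots> = 1" using n3 by (simp add: sum.delta' if_distrib cong: if_cong)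
    finally show ?thesis .
  qed
  then have "\<exists>e. d e \<noteq> 0" by (intro exI[of _ "{c 0, c 1}"]) simp
  then show ?thesis using dF ddeg by (intro exI[of _ d]) auto
qed

lemma x_le1: "x e \<le> 1"
proof (cases "e \<in> E")
  case True
  obtain u w where uw: "e = {u,w}" "u \<in> V1" "w \<in> V2" "u \<noteq> w" by (rule edge[OF True])
  have "x e \<le> X u" unfolding X_def using True uw finc by (intro member_le_sum) (auto simp: inc_def xnn)
  then show ?thesis using Xle1[of u] by simp
qed (simp add: x0)

lemma degen_contra:
  assumes ext: "extreme_pt x (S_poly (V1 \<union> V2) E1 E2 R)"
    and dg: "\<forall>f\<in>E. 0 < x f \<longrightarrow> bt (uof f) f = 0 \<and> bt (uof f) f + si (uof f) f = 1"
    and frac: "e1 \<in> E" "0 < x e1" "x e1 < 1"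
  shows False
proof -
  have degv: "bt v f = 0 \<and> si v f = 1" if f: "f \<in> inc E v" and fp: "0 < x f" for v f
  proof -
    have fE: "f \<in> E" and vf: "v \<in> f" using f by (auto simp: inc_def)
    obtain u w where uw: "f = {u,w}" "u \<in> V1" "w \<in> V2" "u \<noteq> w" by (rule edge[OF fE])
    have uo: "uof f = u" by (rule uof[OF uw(1-3)])
    have a: "bt u f = 0" "bt u f + si u f = 1" using dg fE fp uo by auto
    have t: "si u f = si w f" "bt u f + si u f + bt w f = 1" using tight[OF fE fp uw(1-3)] by auto
    show ?thesis using vf uw a t by auto
  qed
  have Xv: "X v = 1" if "f \<in> inc E v" "0 < x f" for v f
  proof -
    have "x f \<le> X v" unfolding X_def using that finc by (intro member_le_sum) (auto simp: xnn)
    then show ?thesis using main_count that by force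
  qed
  have tied: "g \<in> indiff E R v f" if f: "f \<in> inc E v" "0 < x f" and g: "g \<in> inc E v" "0 < x g" for v f g
  proof (rule ccontr)
    assume gn: "g \<notin> indiff E R v f"
    have fin: "finite (indiff E R v f)" using finite_subset[OF indiff_sub finc] .
    have "si v f + x g = sum x (insert g (indiff E R v f))" unfolding si_def using gn fin by simp
    also have "\<dots> \<le> X v" unfolding X_def using g indiff_sub by (intro sum_mono2[OF finc]) (auto simp: xnn)
    finally show False using degv[OF f] Xv[OF f] g(2) by simp
  qed
  define F where "F = {e\<in>E. 0 < x e \<and> x e < 1}"
  have FE: "F \<subseteq> E" and Fne: "F \<noteq> {}" using frac by (auto simp: F_def)
  have deg2: "\<forall>e\<in>F. \<forall>v\<in>e. \<exists>f\<in>F. f \<noteq> e \<and> v \<in> f"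
  proof (intro ballI)
    fix e v assume e: "e \<in> F" and v: "v \<in> e"
    have ei: "e \<in> inc E v" using e v by (auto simp: F_def inc_def)
    have X1: "X v = 1" using Xv[OF ei] e by (auto simp: F_def)
    have fin: "finite (inc E v - {e})" using finc by auto
    have sr: "sum x (inc E v - {e}) = 1 - x e" using X1 ei finc unfolding X_def by (simp add: sum_diff1)
    have "\<exists>f\<in>inc E v - {e}. 0 < x f"
    proof (rule ccontr)
      assume "\<not> ?thesis"
      then have "sum x (inc E v - {e}) = 0" using xnn by (intro sum.neutral) (metis order.not_eq_order_implies_strict)
      then show False using sr e by (auto simp: F_def)
    qed
    then obtain f where f: "f \<in> inc E v - {e}" "0 < x f" by blast
    have "x f \<le> sum x (inc E v - {e})" using f fin by (intro member_le_sum) (auto simp: xnn)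
    then have "x f < 1" using sr e by (auto simp: F_def)
    then show "\<exists>f\<in>F. f \<noteq> e \<and> v \<in> f" using f by (auto simp: F_def inc_def)
  qed
  obtain d :: "'v set \<Rightarrow> real" where dF: "\<forall>e. e \<notin> F \<longrightarrow> d e = 0" and ddeg: "\<forall>v. sum d (inc E v) = 0"
    and dnz: "\<exists>e. d e \<noteq> 0"
    using cycle_d[OF FE Fne deg2] by blast
  have finF: "finite F" using finite_subset[OF FE finE] .
  define m where "m = Min (x ` F)"
  define M where "M = Max ((\<lambda>e. \<bar>d e\<bar>) ` F)"
  have mpos: "m > 0" unfolding m_def using finF Fne by (subst Min_gr_iff) (auto simp: F_def)
  have mle: "m \<le> x e" if "e \<in> F" for e unfolding m_def using finF that by auto
  have Mge: "\<bar>d e\<bar> \<le> M" if "e \<in> F" for e unfolding M_def using finF that by auto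
  obtain e2 where e2: "d e2 \<noteq> 0" using dnz by blast
  then have e2F: "e2 \<in> F" using dF by auto
  have Mpos: "M > 0" using Mge[OF e2F] e2 by simp
  define \<epsilon> where "\<epsilon> = m / M"
  have epos: "\<epsilon> > 0" using mpos Mpos by (simp add: \<epsilon>_def)
  have ebound: "\<epsilon> * \<bar>d e\<bar> \<le> x e" for e
  proof (cases "e \<in> F")
    case True
    have "\<epsilon> * \<bar>d e\<bar> \<le> \<epsilon> * M" using Mge[OF True] epos by (intro mult_left_mono) auto
    also have "\<dots> = m" using Mpos by (simp add: \<epsilon>_def)
    finally show ?thesis using mle[OF True] by simp
  qed (use dF xnn in simp)
  have dsum0: "sum d A = 0" if A: "A \<subseteq> inc E v"
      and all: "(\<forall>g\<in>inc E v. 0 < x g \<longrightarrow> g \<in> A) \<or> (\<forall>g\<in>inc E v. 0 < x g \<longrightarrow> g \<notin> A)" for A v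
  proof -
    have dF': "d g = 0" if "\<not> 0 < x g" for g using dF that by (auto simp: F_def)
    from all show ?thesis
    proof
      assume h: "\<forall>g\<in>inc E v. 0 < x g \<longrightarrow> g \<in> A"
      have "sum d (inc E v) = sum d A"
        by (rule sum.mono_neutral_right[OF finc A]) (use h dF' in blast)
      then show ?thesis using ddeg by simp
    next
      assume h: "\<forall>g\<in>inc E v. 0 < x g \<longrightarrow> g \<notin> A"
      show ?thesis by (rule sum.neutral) (use h dF' A in blast)
    qed
  qed
  have bsum0: "sum d (better E R v e) = 0" if "e \<in> inc E v" for v e
  proof (rule dsum0[OF better_sub])
    show "(\<forall>g\<in>inc E v. 0 < x g \<longrightarrow> g \<in> better E R v e) \<or> (\<forall>g\<in>inc E v. 0 < x g \<longrightarrow> g \<notin> better E R v e)"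
    proof (rule ccontr)
      assume "\<not> ?thesis"
      then obtain g1 g2 where g: "g1 \<in> inc E v" "0 < x g1" "g1 \<notin> better E R v e"
        "g2 \<in> inc E v" "0 < x g2" "g2 \<in> better E R v e" by blast
      have t: "R v g1 g2" "R v g2 g1" using tied[OF g(4,5) g(1,2)] by (auto simp: indiff_def)
      have "R v g2 e" "\<not> R v e g2" using g(6) by (auto simp: better_def strict_def)
      then have "R v g1 e" "\<not> R v e g1" using trn[OF g(1) g(4) that t(1)] trn[OF that g(1) g(4) _ t(1)] by auto
      then show False using g(1,3) by (auto simp: better_def strict_def)
    qed
  qed
  have isum0: "sum d (indiff E R v e) = 0" if "e \<in> inc E v" for v e
  proof (rule dsum0[OF indiff_sub])
    show "(\<forall>g\<in>inc E v. 0 < x g \<longrightarrow> g \<in> indiff E R v e) \<or> (\<forall>g\<in>inc E v. 0 < x g \<longrightarrow> g \<notin> indiff E R v e)"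
    proof (rule ccontr)
      assume "\<not> ?thesis"
      then obtain g1 g2 where g: "g1 \<in> inc E v" "0 < x g1" "g1 \<notin> indiff E R v e"
        "g2 \<in> inc E v" "0 < x g2" "g2 \<in> indiff E R v e" by blast
      have t: "R v g1 g2" "R v g2 g1" using tied[OF g(4,5) g(1,2)] by (auto simp: indiff_def)
      have "R v g2 e" "R v e g2" using g(6) by (auto simp: indiff_def)
      then have "R v g1 e" "R v e g1" using trn[OF g(1) g(4) that t(1)] trn[OF that g(4) g(1) _ t(2)] by auto
      then show False using g(1,3) by (auto simp: indiff_def)
    qed
  qed
  have dE1: "d e = 0" if "e \<in> E1" for e
  proof (rule ccontr)
    assume "d e \<noteq> 0"
    then have eF: "e \<in> F" using dF by auto
    then have eE: "e \<in> E" and ep: "0 < x e" "x e < 1" by (auto simp: F_def)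
    obtain u w where uw: "e = {u,w}" "u \<in> V1" "w \<in> V2" "u \<noteq> w" by (rule edge[OF eE])
    have "si u e = x e" using tight(3)[OF eE ep(1) uw(1-3) that] .
    moreover have "si u e = 1" using degv[of e u] eE uw ep by (auto simp: inc_def)
    ultimately show False using ep by simp
  qed
  have pert: "(\<lambda>e. x e + t * d e) \<in> S_poly (V1 \<union> V2) E1 E2 R" if t: "\<bar>t\<bar> \<le> \<epsilon>" for t
  proof -
    let ?y = "\<lambda>e. x e + t * d e"
    have yb: "sum ?y (better E R v e) = bt v e" if "e \<in> inc E v" for v e
      using bsum0[OF that] unfolding bt_def by (simp add: sum.distrib sum_distrib_left[symmetric])
    have yi: "sum ?y (indiff E R v e) = si v e" if "e \<in> inc E v" for v e
      using isum0[OF that] unfolding si_def by (simp add: sum.distrib sum_distrib_left[symmetric])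
    have yd: "sum ?y (inc E v) = X v" for v
      using ddeg unfolding X_def by (simp add: sum.distrib sum_distrib_left[symmetric])
    have nn: "0 \<le> ?y e" for e
    proof -
      have "\<bar>t * d e\<bar> \<le> \<epsilon> * \<bar>d e\<bar>" using t by (simp add: abs_mult mult_right_mono)
      then show ?thesis using ebound[of e] by linarith
    qed
    have off: "?y e = 0" if "e \<notin> E1 \<union> E2" for e
    proof -
      have "e \<notin> E" using that EE by simp
      then have "x e = 0" "d e = 0" using x0 dF FE by auto
      then show ?thesis by simp
    qed
    have st1: "?y e + (\<Sum>v\<in>e. sum ?y (better E R v e)) \<ge> 1" if e: "e \<in> E1" for e
    proof -
      have eE: "e \<in> E" using e EE by simp
      have "(\<Sum>v\<in>e. sum ?y (better E R v e)) = (\<Sum>v\<in>e. bt v e)"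
        using yb eE by (intro sum.cong refl) (auto simp: inc_def)
      then show ?thesis using c1[OF e] dE1[OF e] by simp
    qed
    have st2: "sum ?y (indiff E R v e) + (\<Sum>w\<in>e. sum ?y (better E R w e)) \<ge> 1" if e: "e \<in> E2" and v: "v \<in> e" for e v
    proof -
      have eE: "e \<in> E" using e EE by simp
      have "(\<Sum>v\<in>e. sum ?y (better E R v e)) = (\<Sum>v\<in>e. bt v e)"
        using yb eE by (intro sum.cong refl) (auto simp: inc_def)
      moreover have "sum ?y (indiff E R v e) = si v e" using yi eE v by (auto simp: inc_def)
      ultimately show ?thesis using c2[OF e v] by simp
    qed
    show ?thesis unfolding S_poly_def EE[symmetric]
      using off EE nn yd Xle1 st1 st2 by auto
  qed
  have yS': "(\<lambda>e. x e + \<epsilon> * d e) \<in> S_poly (V1 \<union> V2) E1 E2 R" using pert[of \<epsilon>] epos by simp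
  have zS': "(\<lambda>e. x e + (- \<epsilon>) * d e) \<in> S_poly (V1 \<union> V2) E1 E2 R" using pert[of "-\<epsilon>"] epos by simp
  have cx: "x = (\<lambda>e. (1/2) * (x e + \<epsilon> * d e) + (1 - 1/2) * (x e + (- \<epsilon>) * d e))"
    by (simp add: algebra_simps)
  have "(\<lambda>e. x e + \<epsilon> * d e) = (\<lambda>e. x e + (- \<epsilon>) * d e)"
  proof -
    have h: "\<forall>y\<in>S_poly (V1 \<union> V2) E1 E2 R. \<forall>z\<in>S_poly (V1 \<union> V2) E1 E2 R. \<forall>t::real. 0 < t \<and> t < 1 \<and> x = (\<lambda>e. t * y e + (1 - t) * z e) \<longrightarrow> y = z"
      using ext unfolding extreme_pt_def by blast
    have ht: "(0::real) < 1/2" "(1/2::real) < 1" by simp_all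
    show ?thesis using h[rule_format, OF yS' zS', of "1/2"] ht cx by blast
  qed
  then have "x e2 + \<epsilon> * d e2 = x e2 + (- \<epsilon>) * d e2" by metis
  then show False using epos e2 by simp
qed

lemma integral:
  assumes ext: "extreme_pt x (S_poly (V1 \<union> V2) E1 E2 R)"
  shows "x e = 0 \<or> x e = 1"
proof (rule ccontr)
  assume "\<not> (x e = 0 \<or> x e = 1)"
  then have ep: "0 < x e" "x e < 1" using xnn[of e] x_le1[of e] by auto
  then have eE: "e \<in> E" using x0 by force
  show False
  proof (cases "\<exists>f\<in>E. 0 < x f \<and> (0 < bt (uof f) f \<or> bt (uof f) f + si (uof f) f < 1)")
    case True
    then obtain f where "f \<in> E" "0 < x f" "0 < bt (uof f) f \<or> bt (uof f) f + si (uof f) f < 1" by blast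
    then show False using split_contra[OF ext] by blast
  next
    case False
    have "\<forall>f\<in>E. 0 < x f \<longrightarrow> bt (uof f) f = 0 \<and> bt (uof f) f + si (uof f) f = 1"
    proof (intro ballI impI)
      fix f assume "f \<in> E" "0 < x f"
      then have "\<not> 0 < bt (uof f) f" "\<not> bt (uof f) f + si (uof f) f < 1" using False by auto
      moreover have "0 \<le> bt (uof f) f" "bt (uof f) f + si (uof f) f \<le> 1"
        using bt_nn bs_le[of "uof f" f] Xle1[of "uof f"] by auto
      ultimately show "bt (uof f) f = 0 \<and> bt (uof f) f + si (uof f) f = 1" by linarith
    qed
    then show False using degen_contra[OF ext _ eE ep] by blast
  qed
qed

end

lemma NU_result:
  assumes "NU V1 V2 E E1 E2 R x" and ext: "extreme_pt x (S_poly (V1 \<union> V2) E1 E2 R)"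
  shows "\<exists>\<mu>. matching E \<mu> \<and> nonuniformly_stable E1 E2 R \<mu> \<and> indicator \<mu> = x"
proof -
  interpret NU V1 V2 E E1 E2 R x by fact
  have int: "x e = 0 \<or> x e = 1" for e using integral[OF ext] .
  define \<mu> where "\<mu> = {e\<in>E. x e = 1}"
  have ind: "indicator \<mu> = x"
  proof
    fix e show "indicator \<mu> e = x e"
      using int[of e] x0[of e] by (auto simp: \<mu>_def indicator_def)
  qed
  have muE: "\<mu> \<subseteq> E" by (auto simp: \<mu>_def)
  have card_inc: "real (card (inc \<mu> v)) = X v" for v
  proof -
    have sub: "inc \<mu> v \<subseteq> inc E v" using muE by (auto simp: inc_def)
    have "X v = sum x (inc \<mu> v)" unfolding X_def
      by (rule sum.mono_neutral_right[OF finc sub]) (use int in \<open>auto simp: inc_def \<mu>_def\<close>)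
    also have "\<dots> = sum (\<lambda>_. 1) (inc \<mu> v)" by (rule sum.cong) (auto simp: inc_def \<mu>_def)
    finally show ?thesis by simp
  qed
  have finmu: "finite (inc \<mu> v)" for v using finite_subset[OF _ finc, of "inc \<mu> v" v] muE by (auto simp: inc_def)
  have card1: "card (inc \<mu> v) \<le> 1" for v using card_inc[of v] Xle1[of v] by linarith
  have mat: "matching E \<mu>" unfolding matching_def using muE card1 by auto
  have muat: "mu_at \<mu> v = f" if fm: "f \<in> \<mu>" and vf: "v \<in> f" for v f
  proof -
    have fi: "f \<in> inc \<mu> v" using fm vf by (simp add: inc_def)
    have all: "\<forall>a\<in>inc \<mu> v. \<forall>b\<in>inc \<mu> v. a = b"
      using card_le_Suc0_iff_eq[OF finmu[of v]] card1[of v] by simp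
    have uniq: "g = f" if gm: "g \<in> \<mu>" "v \<in> g" for g
    proof -
      have gi: "g \<in> inc \<mu> v" using gm by (simp add: inc_def)
      show ?thesis using all fi gi by blast
    qed
    have ex: "\<exists>e\<in>\<mu>. v \<in> e" using fm vf by blast
    have "(THE e. e \<in> \<mu> \<and> v \<in> e) = f"
      by (rule the_equality) (use fm vf uniq in blast)+
    then show ?thesis unfolding mu_at_def using ex by simp
  qed
  have pos_mem: "\<exists>f\<in>A. f \<in> \<mu>" if "0 < sum x A" "A \<subseteq> E" for A
  proof (rule ccontr)
    assume "\<not> ?thesis"
    then have "\<forall>f\<in>A. x f = 0" using int that(2) by (auto simp: \<mu>_def)
    then have "sum x A = 0" by simp
    then show False using that by simp
  qed
  have nwb: "\<not> weakly_blocks R \<mu> e" if e: "e \<in> E" and v: "v \<in> e" and b: "0 < bt v e" for e v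
  proof -
    obtain f where f: "f \<in> better E R v e" "f \<in> \<mu>"
      using pos_mem[of "better E R v e"] b better_sub incsub unfolding bt_def by blast
    then have "v \<in> f" "\<not> R v e f" by (auto simp: better_def strict_def inc_def)
    then have "\<not> R v e (mu_at \<mu> v)" using muat[OF f(2)] by simp
    then show ?thesis using v by (auto simp: weakly_blocks_def)
  qed
  have sumpos: "\<exists>v\<in>e. 0 < bt v e" if "0 < (\<Sum>v\<in>e. bt v e)" for e
  proof (rule ccontr)
    assume "\<not> ?thesis"
    then have "(\<Sum>v\<in>e. bt v e) \<le> 0" by (intro sum_nonpos) auto
    then show False using that by simp
  qed
  have s1: "\<not> weakly_blocks R \<mu> e" if e: "e \<in> E1 - \<mu>" for e
  proof -
    have eE: "e \<in> E" using e EE by auto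
    have "x e = 0" using int[of e] e eE by (auto simp: \<mu>_def)
    then have "0 < (\<Sum>v\<in>e. bt v e)" using c1[of e] e by auto
    then obtain v where "v \<in> e" "0 < bt v e" using sumpos by blast
    then show ?thesis using nwb eE by blast
  qed
  have s2: "\<not> strongly_blocks R \<mu> e" if e: "e \<in> E2 - \<mu>" for e
  proof (cases "\<exists>v\<in>e. 0 < bt v e")
    case True
    have eE: "e \<in> E" using e EE by auto
    then show ?thesis using True nwb by (auto simp: strongly_blocks_def)
  next
    case False
    have eE: "e \<in> E" using e EE by auto
    have "(\<Sum>v\<in>e. bt v e) = 0" using False bt_nn by (intro sum.neutral) (metis order.not_eq_order_implies_strict)
    then have sv: "0 < si v e" if "v \<in> e" for v using c2[of e v] e that by auto
    have "R w (mu_at \<mu> w) e" if w: "w \<in> e" for w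
    proof -
      obtain f where f: "f \<in> indiff E R w e" "f \<in> \<mu>"
        using pos_mem[of "indiff E R w e"] sv[OF w] indiff_sub incsub unfolding si_def by blast
      then have "w \<in> f" "R w f e" by (auto simp: indiff_def inc_def)
      then show ?thesis using muat[OF f(2)] by simp
    qed
    then show ?thesis by (auto simp: strongly_blocks_def strict_def)
  qed
  have "nonuniformly_stable E1 E2 R \<mu>"
    unfolding nonuniformly_stable_def using mat EE s1 s2 by auto
  then show ?thesis using mat ind by blast
qed

theorem lemma4p3:
  fixes V1 V2 :: "'v set" and E E1 E2 :: "'v set set"
    and R :: "'v \<Rightarrow> 'v set \<Rightarrow> 'v set \<Rightarrow> bool" and x :: "'v set \<Rightarrow> real"
  assumes "bip_graph V1 V2 E"
    and "E = E1 \<union> E2" and "E1 \<inter> E2 = {}"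
    and "pref_ok (V1 \<union> V2) E R"
    and "extreme_pt x (S_poly (V1 \<union> V2) E1 E2 R)"
  shows "\<exists>\<mu>. matching E \<mu> \<and> nonuniformly_stable E1 E2 R \<mu> \<and> indicator \<mu> = x"
proof (rule NU_result[OF _ assms(5)])
  show "NU V1 V2 E E1 E2 R x"
    using assms by unfold_locales (auto simp: extreme_pt_def)
qed

end
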